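(* For every $n$ with $2\le n\le\infty$, the identity $ytxsyx \approx ytxsxy$ is a finite identity basis for the $\sharp$-sylvester monoid $\mathrm{sylv}^\sharp_n$. Consequently, all $\sharp$-sylvester monoids of rank at least $2$ (including rank $\infty$) are equationally equivalent.
   Context: Let $\mathcal{A}=\{1<2<3<\cdots\}$, $\mathcal{A}_n=\{1<\cdots<n\}$, $\mathcal{A}_\infty=\mathcal{A}$. A left strict binary search tree is a labelled rooted binary tree (labels in $\mathcal{A}$) in which each node's label is $>$ every label in its left subtree and $\le$ every label in its right subtree. Inserting $a$ into such a tree $T$: if $T$ is empty, create a node labelled $a$; otherwise, with root label $x$, recursively insert $a$ into the left subtree if $a<x$ and into the right subtree otherwise. For $w=w_1\cdots w_k\in\mathcal{A}^*$, $\mathrm{P}^\sharp(w)$ is obtained from the empty tree by inserting $w_1,w_2,\dots,w_k$ in this order (reading left to right). The relation $u\equiv v\iff\mathrm{P}^\sharp(u)=\mathrm{P}^\sharp(v)$ is a congruence, and $\mathrm{sylv}^\sharp_n=\mathcal{A}_n^*/{\equiv}$. Identities: $\mathcal{X}$ is a countably infinite alphabet; an identity is $\mathbf{u}\approx\mathbf{v}$ with $\mathbf{u},\mathbf{v}\in\mathcal{X}^*$; a monoid $S$ satisfies it if $\varphi(\mathbf{u})=\varphi(\mathbf{v})$ for all maps $\varphi:\mathcal{X}\to S$ (extended to monoid homomorphisms). $\mathbf{u}\approx\mathbf{v}$ is derived from a set $\Sigma$ if there is a sequence $\mathbf{u}=\mathbf{u}_1,\dots,\mathbf{u}_m=\mathbf{v}$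 with $\mathbf{u}_i=\mathbf{a}\varphi(\mathbf{p})\mathbf{b}$, $\mathbf{u}_{i+1}=\mathbf{a}\varphi(\mathbf{q})\mathbf{b}$ for some words $\mathbf{a},\mathbf{b}\in\mathcal{X}^*$, a monoid endomorphism $\varphi$ of $\mathcal{X}^*$ (letters may go to the empty word), and $\mathbf{p}\approx\mathbf{q}\in\Sigma$. A finite identity basis for $S$ is a finite set $\Sigma$ of identities satisfied by $S$ from which every identity satisfied by $S$ is derived. Two monoids are equationally equivalent if they satisfy the same identities. *)

theory Defs
  imports Main "HOL-Library.Extended_Nat"
begin

datatype ltree = Lf | Nd ltree nat ltree

fun ins_sharp :: "nat \<Rightarrow> ltree \<Rightarrow> ltree" where
  "ins_sharp a Lf = Nd Lf a Lf"
| "ins_sharp a (Nd l x r) =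
     (if a < x then Nd (ins_sharp a l) x r else Nd l x (ins_sharp a r))"

definition P_sharp :: "nat list \<Rightarrow> ltree" where
  "P_sharp w = fold ins_sharp w Lf"

definition alph :: "enat \<Rightarrow> nat set" where
  "alph n = {a. 1 \<le> a \<and> enat a \<le> n}"

definition sylv_equiv :: "nat list \<Rightarrow> nat list \<Rightarrow> bool" where
  "sylv_equiv u v \<longleftrightarrow> P_sharp u = P_sharp v"

(* Variables X: nat (countably infinite); words over X: nat list.
   Extension of a letter map to a monoid homomorphism of free monoids. *)
definition hom_ext :: "(nat \<Rightarrow> 'b list) \<Rightarrow> nat list \<Rightarrow> 'b list" where
  "hom_ext \<phi> u = concat (map \<phi> u)"

(* sylv^sharp_n = A_n^* / \<equiv> satisfies u \<approx> v: every assignment of the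
   variables to elements of the monoid (represented by words over A_n, i.e.
   elements of A_n^* taken modulo \<equiv>) yields equal elements *)
definition sylv_satisfies :: "enat \<Rightarrow> nat list \<times> nat list \<Rightarrow> bool" where
  "sylv_satisfies n e \<longleftrightarrow>
     (\<forall>\<phi> :: nat \<Rightarrow> nat list. (\<forall>x. set (\<phi> x) \<subseteq> alph n) \<longrightarrow>
        sylv_equiv (hom_ext \<phi> (fst e)) (hom_ext \<phi> (snd e)))"

(* one derivation step from \<Sigma>: a \<phi>(p) b \<rightarrow> a \<phi>(q) b, with p \<approx> q in \<Sigma>
   (identities are unordered, so either orientation may be used) *)
definition deriv_step :: "(nat list \<times> nat list) set \<Rightarrow> nat list \<Rightarrow> nat list \<Rightarrow> bool" where
  "deriv_step \<Sigma> u v \<longleftrightarrow>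
     (\<exists>a b p q \<phi>. ((p, q) \<in> \<Sigma> \<or> (q, p) \<in> \<Sigma>) \<and>
        u = a @ hom_ext \<phi> p @ b \<and> v = a @ hom_ext \<phi> q @ b)"

definition derivable :: "(nat list \<times> nat list) set \<Rightarrow> nat list \<times> nat list \<Rightarrow> bool" where
  "derivable \<Sigma> e \<longleftrightarrow> (deriv_step \<Sigma>)\<^sup>*\<^sup>* (fst e) (snd e)"

definition finite_identity_basis :: "enat \<Rightarrow> (nat list \<times> nat list) set \<Rightarrow> bool" where
  "finite_identity_basis n \<Sigma> \<longleftrightarrow>
     finite \<Sigma> \<and> (\<forall>e\<in>\<Sigma>. sylv_satisfies n e) \<and>
     (\<forall>e. sylv_satisfies n e \<longrightarrow> derivable \<Sigma> e)"

definition equationally_equivalent :: "enat \<Rightarrow> enat \<Rightarrow> bool" where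
  "equationally_equivalent n m \<longleftrightarrow> (\<forall>e. sylv_satisfies n e \<longleftrightarrow> sylv_satisfies m e)"

(* variables x = 0, y = 1, t = 2, s = 3;
   the identity  y t x s y x  \<approx>  y t x s x y *)
definition ident_4p7 :: "nat list \<times> nat list" where
  "ident_4p7 = ([1, 2, 0, 3, 1, 0], [1, 2, 0, 3, 0, 1])"

end

theory Submission
  imports Defs "HOL-Library.Multiset"
begin

fun found :: "nat \<Rightarrow> ltree \<Rightarrow> bool" where
  "found b Lf = False"
| "found b (Nd l x r) = (x = b \<or> (if b < x then found b l else found b r))"

fun diverge :: "nat \<Rightarrow> nat \<Rightarrow> ltree \<Rightarrow> bool" where
  "diverge a b Lf = False"
| "diverge a b (Nd l x r) = (if a < x then (if b < x then diverge a b l else True)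
     else (if b < x then True else diverge a b r))"

lemma diverge_comm: "diverge a b T \<Longrightarrow> ins_sharp a (ins_sharp b T) = ins_sharp b (ins_sharp a T)"
  by (induction T) (auto split: if_splits)

lemma found_ins: "found b T \<Longrightarrow> found b (ins_sharp c T)"
  by (induction T) auto

lemma found_ins_self: "found c (ins_sharp c T)"
  by (induction T) auto

lemma found_diverge: "a < b \<Longrightarrow> found b T \<Longrightarrow> diverge a b T"
  by (induction T) (auto split: if_splits)

lemma diverge_sym: "diverge a b T = diverge b a T"
  by (induction T) auto

lemma found_commute: "found a T \<Longrightarrow> found b T \<Longrightarrow> ins_sharp a (ins_sharp b T) = ins_sharp b (ins_sharp a T)"
proof -
  assume a: "found a T" and b: "found b T"
  consider "a < b" | "b < a" | "a = b" by linarith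
  then show ?thesis
  proof cases
    case 1 then show ?thesis using found_diverge[OF 1 b] diverge_comm by blast
  next
    case 2 then show ?thesis using found_diverge[OF 2 a] diverge_comm diverge_sym by metis
  qed simp
qed

lemma found_fold: "found b T \<Longrightarrow> found b (fold ins_sharp W T)"
  by (induction W arbitrary: T) (auto intro: found_ins)

lemma found_fold_mem: "b \<in> set W \<Longrightarrow> found b (fold ins_sharp W T)"
  by (induction W arbitrary: T) (auto intro: found_fold found_ins_self)

lemma move_ins: "(\<forall>x\<in>set P. found x T) \<Longrightarrow> found a T \<Longrightarrow>
   ins_sharp a (fold ins_sharp P T) = fold ins_sharp P (ins_sharp a T)"
proof (induction P arbitrary: T)
  case Nil then show ?case by simp
next
  case (Cons p P)
  have "ins_sharp a (fold ins_sharp (p # P) T) = ins_sharp a (fold ins_sharp P (ins_sharp p T))" by simp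
  also have "\<dots> = fold ins_sharp P (ins_sharp a (ins_sharp p T))"
    using Cons by (auto intro!: Cons.IH found_ins)
  also have "\<dots> = fold ins_sharp P (ins_sharp p (ins_sharp a T))"
    using Cons.prems found_commute by auto
  finally show ?case by simp
qed

lemma perm_fold: "(\<forall>x\<in>set Z. found x T) \<Longrightarrow> mset Z = mset Z' \<Longrightarrow>
   fold ins_sharp Z T = fold ins_sharp Z' T"
proof (induction Z arbitrary: Z' T)
  case Nil then show ?case by simp
next
  case (Cons a Z)
  have "a \<in> set Z'" using Cons.prems(2) by (metis list.set_intros(1) set_mset_mset)
  then obtain P Q where Z': "Z' = P @ a # Q" by (meson split_list)
  have sP: "\<forall>x\<in>set P. found x T" using Cons.prems Z'
    by (metis Un_iff set_append set_mset_mset list.set_intros(2))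
  have "fold ins_sharp Z' T = fold ins_sharp Q (ins_sharp a (fold ins_sharp P T))" using Z' by simp
  also have "\<dots> = fold ins_sharp Q (fold ins_sharp P (ins_sharp a T))"
    using move_ins[OF sP] Cons.prems by simp
  also have "\<dots> = fold ins_sharp (P @ Q) (ins_sharp a T)" by simp
  also have "\<dots> = fold ins_sharp Z (ins_sharp a T)"
    using Cons.prems Z' by (intro Cons.IH[symmetric]) (auto intro: found_ins)
  finally show ?case by simp
qed


definition swp :: "nat list \<Rightarrow> nat list \<Rightarrow> bool" where
  "swp u v \<longleftrightarrow> (\<exists>A c d B. c \<in> set A \<and> d \<in> set A \<and> u = A @ c # d # B \<and> v = A @ d # c # B)"

lemma move_swp: "c \<in> set A \<Longrightarrow> set P \<subseteq> set A \<Longrightarrow> swp\<^sup>*\<^sup>* (A @ c # P @ Q) (A @ P @ c # Q)"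
proof (induction P arbitrary: A)
  case Nil then show ?case by simp
next
  case (Cons p P)
  have 1: "swp (A @ c # p # P @ Q) (A @ p # c # P @ Q)"
    unfolding swp_def using Cons.prems by auto
  have 2: "swp\<^sup>*\<^sup>* ((A @ [p]) @ c # P @ Q) ((A @ [p]) @ P @ c # Q)"
    using Cons.prems by (intro Cons.IH) auto
  show ?case using converse_rtranclp_into_rtranclp[of swp, OF 1] 2 by simp
qed

lemma main_swp: "mset u = mset v \<Longrightarrow>
  (\<forall>z. z \<notin> set A \<longrightarrow> mset (takeWhile (\<lambda>y. y \<noteq> z) u) = mset (takeWhile (\<lambda>y. y \<noteq> z) v)) \<Longrightarrow>
  swp\<^sup>*\<^sup>* (A @ u) (A @ v)"
proof (induction u arbitrary: A v)
  case Nil then show ?case by simp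
next
  case (Cons c u)
  show ?case
  proof (cases "c \<in> set A")
    case True
    have "c \<in> set v" using Cons.prems(1) by (metis list.set_intros(1) set_mset_mset)
    then obtain P Q where v: "v = P @ c # Q" and cP: "c \<notin> set P" using split_list_first by metis
    have PA: "set P \<subseteq> set A"
    proof
      fix z assume zP: "z \<in> set P"
      show "z \<in> set A"
      proof (rule ccontr)
        assume zA: "z \<notin> set A"
        then have zc: "z \<noteq> c" using True by auto
        have "takeWhile (\<lambda>y. y \<noteq> z) v = takeWhile (\<lambda>y. y \<noteq> z) P"
          using v zP by (simp add: takeWhile_append1)
        moreover have "c \<in> set (takeWhile (\<lambda>y. y \<noteq> z) (c # u))" using zc by simp
        ultimately have "c \<in> set (takeWhile (\<lambda>y. y \<noteq> z) P)"
          using Cons.prems(2) zA by (metis set_mset_mset)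
        then show False using cP by (meson set_takeWhileD)
      qed
    qed
    have m: "mset u = mset (P @ Q)" using Cons.prems(1) v by simp
    have tw: "\<forall>z. z \<notin> set (A @ [c]) \<longrightarrow>
       mset (takeWhile (\<lambda>y. y \<noteq> z) u) = mset (takeWhile (\<lambda>y. y \<noteq> z) (P @ Q))"
    proof (intro allI impI)
      fix z assume z: "z \<notin> set (A @ [c])"
      then have zP: "\<forall>x\<in>set P. x \<noteq> z" using PA by auto
      have "mset (takeWhile (\<lambda>y. y \<noteq> z) (c # u)) = mset (takeWhile (\<lambda>y. y \<noteq> z) v)"
        using Cons.prems(2) z by auto
      then have "add_mset c (mset (takeWhile (\<lambda>y. y \<noteq> z) u)) = mset P + add_mset c (mset (takeWhile (\<lambda>y. y \<noteq> z) Q))"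
        using z zP v by (simp add: takeWhile_append2)
      then show "mset (takeWhile (\<lambda>y. y \<noteq> z) u) = mset (takeWhile (\<lambda>y. y \<noteq> z) (P @ Q))"
        using zP by (simp add: takeWhile_append2)
    qed
    have "swp\<^sup>*\<^sup>* ((A @ [c]) @ u) ((A @ [c]) @ (P @ Q))" using Cons.IH[OF m tw] .
    moreover have "swp\<^sup>*\<^sup>* (A @ c # P @ Q) (A @ P @ c # Q)" using move_swp[OF True PA] .
    ultimately show ?thesis using v by simp
  next
    case False
    have "mset (takeWhile (\<lambda>y. y \<noteq> c) (c # u)) = mset (takeWhile (\<lambda>y. y \<noteq> c) v)"
      using Cons.prems(2) False by blast
    then have "takeWhile (\<lambda>y. y \<noteq> c) v = []" by simp
    moreover have "v \<noteq> []" using Cons.prems(1) by auto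
    ultimately obtain v' where v: "v = c # v'" by (cases v) (auto split: if_splits)
    have m: "mset u = mset v'" using Cons.prems(1) v by simp
    have tw: "\<forall>z. z \<notin> set (A @ [c]) \<longrightarrow>
       mset (takeWhile (\<lambda>y. y \<noteq> z) u) = mset (takeWhile (\<lambda>y. y \<noteq> z) v')"
      using Cons.prems(2) v by auto
    show ?thesis using Cons.IH[OF m tw] v by simp
  qed
qed

definition Cw :: "nat list \<Rightarrow> nat list \<Rightarrow> bool" where
  "Cw u v \<longleftrightarrow> mset u = mset v \<and> (\<forall>z. mset (takeWhile (\<lambda>y. y \<noteq> z) u) = mset (takeWhile (\<lambda>y. y \<noteq> z) v))"

lemma Cw_swp: "Cw u v \<Longrightarrow> swp\<^sup>*\<^sup>* u v"
  using main_swp[of u v "[]"] unfolding Cw_def by simp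

lemma swp_sound: "swp u v \<Longrightarrow> P_sharp (hom_ext \<phi> u) = P_sharp (hom_ext \<phi> v)"
proof -
  assume "swp u v"
  then obtain A c d B where cA: "c \<in> set A" and dA: "d \<in> set A" and u: "u = A @ c # d # B"
    and v: "v = A @ d # c # B" unfolding swp_def by blast
  define T where "T = fold ins_sharp (hom_ext \<phi> A) Lf"
  have "\<forall>x\<in>set (\<phi> c @ \<phi> d). found x T"
    unfolding T_def hom_ext_def using cA dA by (auto intro!: found_fold_mem)
  then have "fold ins_sharp (\<phi> c @ \<phi> d) T = fold ins_sharp (\<phi> d @ \<phi> c) T"
    by (rule perm_fold) simp
  then show ?thesis using u v unfolding P_sharp_def hom_ext_def T_def by simp
qed

lemma swp_star_sound: "swp\<^sup>*\<^sup>* u v \<Longrightarrow> P_sharp (hom_ext \<phi> u) = P_sharp (hom_ext \<phi> v)"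
  by (induction rule: rtranclp_induct) (auto dest: swp_sound[where \<phi>=\<phi>])

lemma swp_deriv: "swp u v \<Longrightarrow> (deriv_step {ident_4p7})\<^sup>*\<^sup>* u v"
proof -
  assume "swp u v"
  then obtain A c d B where cA: "c \<in> set A" and dA: "d \<in> set A" and u: "u = A @ c # d # B"
    and v: "v = A @ d # c # B" unfolding swp_def by blast
  show ?thesis
  proof (cases "c = d")
    case True then show ?thesis using u v by simp
  next
    case False
    obtain A1 A2 where A: "A = A1 @ c # A2" and cA1: "c \<notin> set A1" using split_list_first[OF cA] by blast
    have "d \<in> set A1 \<or> d \<in> set A2" using dA A False by auto
    then show ?thesis
    proof
      assume "d \<in> set A2"
      then obtain A3 A4 where A2: "A2 = A3 @ d # A4" by (meson split_list)
      define \<phi> where "\<phi> = (\<lambda>v::nat. if v = 1 then [c] else if v = 2 then A3 else if v = 0 then [d] else A4)"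
      have "deriv_step {ident_4p7} u v"
        unfolding deriv_step_def
        apply (rule exI[of _ A1], rule exI[of _ B], rule exI[of _ "fst ident_4p7"], rule exI[of _ "snd ident_4p7"], rule exI[of _ \<phi>])
        using u v A A2 by (simp add: \<phi>_def hom_ext_def ident_4p7_def)
      then show ?thesis by simp
    next
      assume "d \<in> set A1"
      then obtain A3 A4 where A1: "A1 = A3 @ d # A4" by (meson split_list)
      define \<phi> where "\<phi> = (\<lambda>v::nat. if v = 1 then [d] else if v = 2 then A4 else if v = 0 then [c] else A2)"
      have "deriv_step {ident_4p7} u v"
        unfolding deriv_step_def
        apply (rule exI[of _ A3], rule exI[of _ B], rule exI[of _ "snd ident_4p7"], rule exI[of _ "fst ident_4p7"], rule exI[of _ \<phi>])
        using u v A A1 by (simp add: \<phi>_def hom_ext_def ident_4p7_def)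
      then show ?thesis by simp
    qed
  qed
qed

lemma swp_star_deriv: "swp\<^sup>*\<^sup>* u v \<Longrightarrow> (deriv_step {ident_4p7})\<^sup>*\<^sup>* u v"
  by (induction rule: rtranclp_induct) (auto dest: swp_deriv)

lemma Cw_sat: "Cw u v \<Longrightarrow> sylv_satisfies n (u, v)"
  unfolding sylv_satisfies_def sylv_equiv_def using swp_star_sound[OF Cw_swp] by simp

lemma ident_sat: "sylv_satisfies n ident_4p7"
proof -
  have "swp [1,2,0,3,1,0] [1,2,0,3,0,1]" unfolding swp_def
    by (rule exI[of _ "[1,2,0,3]"], rule exI[of _ 1], rule exI[of _ 0], rule exI[of _ "[]"]) simp
  then show ?thesis unfolding sylv_satisfies_def sylv_equiv_def ident_4p7_def
    using swp_sound by auto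
qed


fun one_spine :: "ltree \<Rightarrow> nat" where
  "one_spine Lf = 0"
| "one_spine (Nd l x r) = (if x = 1 then Suc (one_spine r) else 0)"

lemma fold_ge: "(\<forall>a\<in>set w. x \<le> a) \<Longrightarrow> fold ins_sharp w (Nd l x r) = Nd l x (fold ins_sharp w r)"
  by (induction w arbitrary: r) auto

lemma fold_root: "\<exists>l' r'. fold ins_sharp w (Nd l x r) = Nd l' x r'"
proof (induction w arbitrary: l r)
  case Nil then show ?case by simp
next
  case (Cons a w)
  show ?case using Cons.IH by (cases "a < x") auto
qed

lemma spine: "(\<forall>a\<in>set R. 1 \<le> a) \<Longrightarrow> (R = [] \<or> hd R = 2) \<Longrightarrow>
   one_spine (P_sharp (replicate k 1 @ R)) = k"
proof (induction k)
  case 0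
  show ?case
  proof (cases R)
    case Nil then show ?thesis by (simp add: P_sharp_def)
  next
    case (Cons a R')
    then have a: "a = 2" using 0 by simp
    obtain l' r' where "fold ins_sharp R' (Nd Lf 2 Lf) = Nd l' 2 r'" using fold_root by blast
    then show ?thesis using Cons a by (simp add: P_sharp_def)
  qed
next
  case (Suc k)
  have "P_sharp (replicate (Suc k) 1 @ R) = fold ins_sharp (replicate k 1 @ R) (Nd Lf 1 Lf)"
    by (simp add: P_sharp_def)
  also have "\<dots> = Nd Lf 1 (P_sharp (replicate k 1 @ R))"
    using Suc.prems by (subst fold_ge) (auto simp: P_sharp_def)
  finally show ?case using Suc by simp
qed

lemma size_ins: "size (ins_sharp a T) = Suc (size T)"
  by (induction T) auto

lemma size_P: "size (fold ins_sharp w T) = length w + size T"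
  by (induction w arbitrary: T) (auto simp: size_ins)

lemma hom_nz: "z \<noteq> w \<Longrightarrow> z \<notin> set xs \<Longrightarrow>
  hom_ext (\<lambda>x. if x = z then [2::nat] else if x = w then [1] else []) xs = replicate (count_list xs w) 1"
  by (induction xs) (auto simp: hom_ext_def)

lemma hom_set: "set (hom_ext (\<lambda>x. if x = z then [2] else if x = w then [1::nat] else []) xs) \<subseteq> {1,2}"
  by (auto simp: hom_ext_def split: if_splits)

lemma hom_split: "z \<noteq> w \<Longrightarrow>
  \<exists>R. hom_ext (\<lambda>x. if x = z then [2::nat] else if x = w then [1] else []) u
     = replicate (count_list (takeWhile (\<lambda>y. y \<noteq> z) u) w) 1 @ R \<and> (R = [] \<or> hd R = 2)"
proof -
  assume zw: "z \<noteq> w"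
  let ?\<phi> = "\<lambda>x. if x = z then [2::nat] else if x = w then [1] else []"
  have "u = takeWhile (\<lambda>y. y \<noteq> z) u @ dropWhile (\<lambda>y. y \<noteq> z) u" by simp
  then have e: "hom_ext ?\<phi> u = hom_ext ?\<phi> (takeWhile (\<lambda>y. y \<noteq> z) u) @ hom_ext ?\<phi> (dropWhile (\<lambda>y. y \<noteq> z) u)"
    unfolding hom_ext_def by (metis concat_append map_append)
  have t: "z \<notin> set (takeWhile (\<lambda>y. y \<noteq> z) u)" by (auto dest: set_takeWhileD)
  have "hom_ext ?\<phi> (dropWhile (\<lambda>y. y \<noteq> z) u) = [] \<or> hd (hom_ext ?\<phi> (dropWhile (\<lambda>y. y \<noteq> z) u)) = 2"
  proof (cases "dropWhile (\<lambda>y. y \<noteq> z) u")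
    case (Cons a l)
    then have "a = z" using hd_dropWhile[of "\<lambda>y. y \<noteq> z" u] by simp
    then show ?thesis unfolding Cons hom_ext_def by simp
  next
    case Nil then show ?thesis unfolding Nil hom_ext_def by simp
  qed
  then show ?thesis unfolding e hom_nz[OF zw t] by blast
qed

lemma hom_len: "length (hom_ext (\<lambda>x. if x = w then [1::nat] else []) xs) = count_list xs w"
  by (induction xs) (auto simp: hom_ext_def)

lemma necessity:
  assumes sat: "sylv_satisfies n (u, v)" and n: "2 \<le> n"
  shows "Cw u v"
proof -
  have e1: "enat 1 \<le> 2" unfolding one_enat_def[symmetric] by simp
  have e2: "enat 2 \<le> 2" by (simp add: numeral_eq_enat)
  have al: "{1,2} \<subseteq> alph n" using n order_trans[OF e1 n] order_trans[OF e2 n] unfolding alph_def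
    by auto
  have P: "P_sharp (hom_ext \<phi> u) = P_sharp (hom_ext \<phi> v)" if "\<And>x. set (\<phi> x) \<subseteq> {1,2}" for \<phi>
  proof -
    have "\<forall>x. set (\<phi> x) \<subseteq> alph n" using that al by blast
    then show ?thesis using sat unfolding sylv_satisfies_def sylv_equiv_def by simp
  qed
  have cnt: "count_list u w = count_list v w" for w
  proof -
    have "P_sharp (hom_ext (\<lambda>x. if x = w then [1::nat] else []) u) = P_sharp (hom_ext (\<lambda>x. if x = w then [1::nat] else []) v)"
      by (rule P) auto
    then have "size (P_sharp (hom_ext (\<lambda>x. if x = w then [1::nat] else []) u)) = size (P_sharp (hom_ext (\<lambda>x. if x = w then [1::nat] else []) v))"
      by simp
    then show ?thesis unfolding P_sharp_def size_P hom_len by simp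
  qed
  have tw: "count_list (takeWhile (\<lambda>y. y \<noteq> z) u) w = count_list (takeWhile (\<lambda>y. y \<noteq> z) v) w" for z w
  proof (cases "z = w")
    case True
    have "z \<notin> set (takeWhile (\<lambda>y. y \<noteq> z) xs)" for xs by (auto dest: set_takeWhileD)
    then show ?thesis using True by simp
  next
    case False
    let ?\<phi> = "\<lambda>x. if x = z then [2::nat] else if x = w then [1] else []"
    have e: "P_sharp (hom_ext ?\<phi> u) = P_sharp (hom_ext ?\<phi> v)" by (rule P) auto
    obtain R1 where R1: "hom_ext ?\<phi> u = replicate (count_list (takeWhile (\<lambda>y. y \<noteq> z) u) w) 1 @ R1"
      "R1 = [] \<or> hd R1 = 2" using hom_split[OF False] by blast
    obtain R2 where R2: "hom_ext ?\<phi> v = replicate (count_list (takeWhile (\<lambda>y. y \<noteq> z) v) w) 1 @ R2"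
      "R2 = [] \<or> hd R2 = 2" using hom_split[OF False] by blast
    have s1: "\<forall>a\<in>set R1. 1 \<le> a" using hom_set[of z w u] R1(1) by auto
    have s2: "\<forall>a\<in>set R2. 1 \<le> a" using hom_set[of z w v] R2(1) by auto
    have "one_spine (P_sharp (hom_ext ?\<phi> u)) = one_spine (P_sharp (hom_ext ?\<phi> v))" using e by simp
    then show ?thesis unfolding R1(1) R2(1) spine[OF s1 R1(2)] spine[OF s2 R2(2)] .
  qed
  show ?thesis unfolding Cw_def
    by (auto intro!: multiset_eqI simp: count_mset cnt tw)
qed

theorem theorem4p7:
  shows "(\<forall>n::enat. 2 \<le> n \<longrightarrow> finite_identity_basis n {ident_4p7})
       \<and> (\<forall>n m::enat. 2 \<le> n \<longrightarrow> 2 \<le> m \<longrightarrow> equationally_equivalent n m)"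
proof (intro conjI allI impI)
  fix n :: enat assume n: "2 \<le> n"
  show "finite_identity_basis n {ident_4p7}"
    unfolding finite_identity_basis_def
  proof (intro conjI ballI allI impI)
    fix e assume "sylv_satisfies n e"
    then have "Cw (fst e) (snd e)" using necessity[of n "fst e" "snd e"] n by simp
    then show "derivable {ident_4p7} e" unfolding derivable_def
      using Cw_swp swp_star_deriv by blast
  qed (auto simp: ident_sat)
next
  fix n m :: enat assume n: "2 \<le> n" and m: "2 \<le> m"
  show "equationally_equivalent n m" unfolding equationally_equivalent_def
  proof (intro allI iffI)
    fix e assume "sylv_satisfies n e"
    then have "Cw (fst e) (snd e)" using necessity[of n "fst e" "snd e"] n by simp
    then show "sylv_satisfies m e" using Cw_sat[of "fst e" "snd e" m] by simp
  next
    fix e assume "sylv_satisfies m e"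
    then have "Cw (fst e) (snd e)" using necessity[of m "fst e" "snd e"] m by simp
    then show "sylv_satisfies n e" using Cw_sat[of "fst e" "snd e" n] by simp
  qed
qed

end
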